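(* Let $A=[A_1,\dots,A_n]\in\mathbb{R}^{p\times n}$ be mean-removed, i.e. $A\mathbf{1}=\mathbf{0}$, and let $\beta\doteq-\min_{i,j}(A^TA)_{ij}$. Put $\tilde A=\begin{bmatrix}\sqrt{\beta}\,\mathbf{1}^T\\ A\end{bmatrix}\in\mathbb{R}^{(p+1)\times n}$ and $W\doteq\tilde A^T\tilde A$. Let $F\in\mathbb{R}^{K\times n}$ be the class indicator matrix of the $n$ samples. If $W$ satisfies the ideal graph condition for classification, i.e. $W_{ij}=0$ for all $i,j$ with $F_i\neq F_j$, then $\sqrt{\beta n}$ is the largest singular value of $\tilde A$ and every row of $F$ lies in the span of the right singular vectors of $\tilde A$ associated with the singular value $\sqrt{\beta n}$ (in particular in the row space of $\tilde A$). Consequently zero fitting error is achieved: any minimizer $D^*$ of $\|F-D\tilde A\|_F^2$ over $D\in\mathbb{R}^{K\times(p+1)}$ satisfies $F=D^*\tilde A$.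
   Context: $\mathbf{1}$ denotes the all-ones vector. The indicator matrix $F=[F_1,\dots,F_n]$ has columns $F_i=e_k$ (the $k$th standard basis vector of $\mathbb{R}^K$) if the $i$th sample belongs to class $k$. Since $A\mathbf{1}=\mathbf{0}$ (and $A\neq 0$), $\beta>0$ and $W$ is entrywise nonnegative. Linear regression for classification (LRC) solves $\min_D\|F-D\tilde A\|_F^2$. *)

theory Defs
  imports "Jordan_Normal_Form.Char_Poly"
begin

definition beta_of :: "real mat \<Rightarrow> real" where
  "beta_of A = - Min {(transpose_mat A * A) $$ (i, j) | i j. i < dim_col A \<and> j < dim_col A}"

definition tilde_mat :: "real mat \<Rightarrow> real mat" where
  "tilde_mat A = mat (dim_row A + 1) (dim_col A)
      (\<lambda>(i, j). if i = 0 then sqrt (beta_of A) else A $$ (i - 1, j))"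

definition singular_value :: "real mat \<Rightarrow> real \<Rightarrow> bool" where
  "singular_value M s \<longleftrightarrow> s \<ge> 0 \<and> eigenvalue (transpose_mat M * M) (s ^ 2)"

definition largest_singular_value :: "real mat \<Rightarrow> real \<Rightarrow> bool" where
  "largest_singular_value M s \<longleftrightarrow> singular_value M s \<and> (\<forall>t. singular_value M t \<longrightarrow> t \<le> s)"

definition right_singular_space :: "real mat \<Rightarrow> real \<Rightarrow> real vec set" where
  "right_singular_space M s =
     {v \<in> carrier_vec (dim_col M). (transpose_mat M * M) *\<^sub>v v = (s ^ 2) \<cdot>\<^sub>v v}"

definition row_space :: "real mat \<Rightarrow> real vec set" where
  "row_space M = {transpose_mat M *\<^sub>v c | c. c \<in> carrier_vec (dim_row M)}"

definition frob_sq :: "real mat \<Rightarrow> real" where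
  "frob_sq M = (\<Sum>i<dim_row M. \<Sum>j<dim_col M. (M $$ (i, j))^2)"

end

theory Submission
  imports Defs
begin

lemma tilde_carrier: "A \<in> carrier_mat p n \<Longrightarrow> tilde_mat A \<in> carrier_mat (p+1) n"
  unfolding tilde_mat_def by auto

lemma ATA_entry:
  assumes "A \<in> carrier_mat p n" "i < n" "j < n"
  shows "(transpose_mat A * A) $$ (i, j) = (\<Sum>r=0..<p. A $$ (r, i) * A $$ (r, j))"
  using assms by (auto simp: scalar_prod_def)

lemma W_entry:
  assumes A: "A \<in> carrier_mat p n" and "i < n" "j < n" and b: "beta_of A \<ge> 0"
  shows "(transpose_mat (tilde_mat A) * tilde_mat A) $$ (i, j)
     = beta_of A + (\<Sum>r=0..<p. A $$ (r, i) * A $$ (r, j))"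
proof -
  have "(transpose_mat (tilde_mat A) * tilde_mat A) $$ (i, j)
     = (\<Sum>r=0..<Suc p. tilde_mat A $$ (r, i) * tilde_mat A $$ (r, j))"
    using assms tilde_carrier[OF A] by (auto simp: scalar_prod_def)
  also have "\<dots> = sqrt (beta_of A) * sqrt (beta_of A) + (\<Sum>r=0..<p. A $$ (r, i) * A $$ (r, j))"
    unfolding sum.atLeast0_lessThan_Suc_shift using assms
    by (auto simp: tilde_mat_def intro!: sum.cong)
  finally show ?thesis using b by simp
qed
lemma S_facts:
  fixes A :: "real mat"
  defines "S \<equiv> {(transpose_mat A * A) $$ (i, j) | i j. i < dim_col A \<and> j < dim_col A}"
  shows "finite S" and "i < dim_col A \<Longrightarrow> j < dim_col A \<Longrightarrow> Min S \<le> (transpose_mat A * A) $$ (i, j)"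
    and "i < dim_col A \<Longrightarrow> j < dim_col A \<Longrightarrow> Min S \<in> S"
proof -
  have "S \<subseteq> (\<lambda>(i,j). (transpose_mat A * A) $$ (i, j)) ` ({..<dim_col A} \<times> {..<dim_col A})"
    unfolding S_def by auto
  then show fin: "finite S" by (rule finite_subset) auto
  assume "i < dim_col A" "j < dim_col A"
  then have "(transpose_mat A * A) $$ (i, j) \<in> S" unfolding S_def by blast
  then show "Min S \<le> (transpose_mat A * A) $$ (i, j)" "Min S \<in> S" using fin by (auto intro: Min_in)
qed

lemma beta_facts:
  fixes A :: "real mat"
  assumes A: "A \<in> carrier_mat p n"
    and mean_removed: "A *\<^sub>v vec n (\<lambda>_. 1) = 0\<^sub>v p"
    and A_nonzero: "A \<noteq> 0\<^sub>m p n"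
  shows "beta_of A > 0" and "n > 0"
    and "\<And>i j. i < n \<Longrightarrow> j < n \<Longrightarrow> (\<Sum>r=0..<p. A $$ (r, i) * A $$ (r, j)) \<ge> - beta_of A"
    and "\<And>i. i < n \<Longrightarrow> (\<Sum>j=0..<n. (\<Sum>r=0..<p. A $$ (r, i) * A $$ (r, j))) = 0"
proof -
  define G where "G i j = (\<Sum>r=0..<p. A $$ (r, i) * A $$ (r, j))" for i j
  obtain r c where rc: "r < p" "c < n" "A $$ (r, c) \<noteq> 0"
    using A_nonzero A by (metis carrier_matD(1,2) eq_matI index_zero_mat(1,2,3))
  then show "n > 0" by simp
  have rowsum: "(\<Sum>j=0..<n. A $$ (r, j)) = 0" if "r < p" for r
  proof -
    have "(A *\<^sub>v vec n (\<lambda>_. 1)) $ r = 0" using mean_removed that by simp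
    then show ?thesis using A that by (simp add: scalar_prod_def row_def)
  qed
  show G0: "(\<Sum>j=0..<n. G i j) = 0" if "i < n" for i
  proof -
    have "(\<Sum>j=0..<n. G i j) = (\<Sum>r=0..<p. A $$ (r, i) * (\<Sum>j=0..<n. A $$ (r, j)))"
      unfolding G_def by (simp add: sum_distrib_left sum.swap[of _ "{0..<n}"])
    also have "\<dots> = 0" using rowsum by simp
    finally show ?thesis .
  qed
  have Gle: "Min {(transpose_mat A * A) $$ (i, j) | i j. i < dim_col A \<and> j < dim_col A} \<le> G i j"
    if "i < n" "j < n" for i j
    using S_facts(2)[of i A j] that A ATA_entry[OF A that] unfolding G_def by auto
  then show "G i j \<ge> - beta_of A" if "i < n" "j < n" for i j
    using that unfolding beta_of_def by (simp add: G_def)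
  show "beta_of A > 0"
  proof (rule ccontr)
    assume "\<not> beta_of A > 0"
    then have nn: "G c j \<ge> 0" if "j < n" for j
      using Gle[OF rc(2) that] unfolding beta_of_def by simp
    have "G c c = 0" using G0[OF rc(2)] nn rc(2)
      by (subst (asm) sum_nonneg_eq_0_iff) auto
    moreover have "G c c \<ge> A $$ (r, c) * A $$ (r, c)"
      unfolding G_def by (rule member_le_sum) (use rc in auto)
    moreover have "A $$ (r, c) * A $$ (r, c) > 0" using rc(3) by (metis zero_less_mult_iff linorder_neqE_linordered_idom)
    ultimately show False by simp
  qed
qed
lemma eig_bound:
  fixes W :: "real mat"
  assumes W: "W \<in> carrier_mat n n"
    and nn: "\<And>i j. i < n \<Longrightarrow> j < n \<Longrightarrow> W $$ (i, j) \<ge> 0"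
    and rs: "\<And>i. i < n \<Longrightarrow> (\<Sum>j=0..<n. W $$ (i, j)) = s"
    and ev: "eigenvalue W l"
  shows "l \<le> s"
proof -
  obtain v where v: "v \<in> carrier_vec n" "v \<noteq> 0\<^sub>v n" "W *\<^sub>v v = l \<cdot>\<^sub>v v"
    using ev W unfolding eigenvalue_def eigenvector_def by auto
  define M where "M = Max ((\<lambda>j. \<bar>v $ j\<bar>) ` {0..<n})"
  have "n \<noteq> 0"
  proof
    assume "n = 0" then have "v = 0\<^sub>v n" using v(1) by (intro eq_vecI) auto
    then show False using v(2) by simp
  qed
  then obtain i where i: "i < n" "\<bar>v $ i\<bar> = M"
    using Max_in[of "(\<lambda>j. \<bar>v $ j\<bar>) ` {0..<n}"] unfolding M_def by fastforce
  have Mge: "\<bar>v $ j\<bar> \<le> M" if "j < n" for j unfolding M_def using that by (intro Max_ge) auto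
  have Mpos: "M > 0"
  proof (rule ccontr)
    assume "\<not> M > 0"
    then have "v = 0\<^sub>v n" using Mge v(1) by (intro eq_vecI) (auto, fastforce)
    then show False using v(2) by simp
  qed
  have "l * v $ i = (W *\<^sub>v v) $ i" using v(3) v(1) i by simp
  also have "\<dots> = (\<Sum>j=0..<n. W $$ (i, j) * v $ j)"
    using W v(1) i by (simp add: scalar_prod_def row_def)
  finally have eq: "l * v $ i = (\<Sum>j=0..<n. W $$ (i, j) * v $ j)" .
  have "\<bar>l\<bar> * M = \<bar>l * v $ i\<bar>" using i by (simp add: abs_mult)
  also have "\<dots> \<le> (\<Sum>j=0..<n. \<bar>W $$ (i, j) * v $ j\<bar>)" unfolding eq by (rule sum_abs)
  also have "\<dots> \<le> (\<Sum>j=0..<n. W $$ (i, j) * M)"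
    using nn[OF i(1)] Mge by (intro sum_mono) (simp add: abs_mult mult_left_mono)
  also have "\<dots> = s * M" by (simp add: rs[OF i(1), symmetric] sum_distrib_right)
  finally have "\<bar>l\<bar> * M \<le> s * M" .
  then have "\<bar>l\<bar> \<le> s" using Mpos by simp
  then show ?thesis by simp
qed
theorem theorem1:
  fixes A F :: "real mat" and p n K :: nat
  assumes A_dim: "A \<in> carrier_mat p n"
    and mean_removed: "A *\<^sub>v vec n (\<lambda>_. 1) = 0\<^sub>v p"
    and A_nonzero: "A \<noteq> 0\<^sub>m p n"
    and F_dim: "F \<in> carrier_mat K n"
    and F_indicator: "\<forall>i<n. \<exists>k<K. col F i = unit_vec K k"
    and ideal: "\<forall>i<n. \<forall>j<n. col F i \<noteq> col F j \<longrightarrow>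
                  (transpose_mat (tilde_mat A) * tilde_mat A) $$ (i, j) = 0"
  shows "largest_singular_value (tilde_mat A) (sqrt (beta_of A * real n))
       \<and> (\<forall>k<K. row F k \<in> right_singular_space (tilde_mat A) (sqrt (beta_of A * real n))
                 \<and> row F k \<in> row_space (tilde_mat A))
       \<and> (\<forall>Ds \<in> carrier_mat K (p + 1).
            (\<forall>D \<in> carrier_mat K (p + 1). frob_sq (F - Ds * tilde_mat A) \<le> frob_sq (F - D * tilde_mat A))
            \<longrightarrow> F = Ds * tilde_mat A)"
proof -
  define b where "b = beta_of A"
  define T where "T = tilde_mat A"
  define W where "W = transpose_mat T * T"
  define G where "G i j = (\<Sum>r=0..<p. A $$ (r, i) * A $$ (r, j))" for i j
  have bpos: "b > 0" and npos: "n > 0" using beta_facts[OF A_dim mean_removed A_nonzero] b_def by auto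
  have Gge: "G i j \<ge> - b" if "i < n" "j < n" for i j
    using beta_facts(3)[OF A_dim mean_removed A_nonzero that] b_def G_def by auto
  have G0: "(\<Sum>j=0..<n. G i j) = 0" if "i < n" for i
    using beta_facts(4)[OF A_dim mean_removed A_nonzero that] G_def by auto
  have T: "T \<in> carrier_mat (p+1) n" using tilde_carrier[OF A_dim] T_def by simp
  have W: "W \<in> carrier_mat n n" using T W_def by auto
  have Wij: "W $$ (i, j) = b + G i j" if "i < n" "j < n" for i j
    using W_entry[OF A_dim that] bpos b_def W_def T_def G_def by simp
  have Wnn: "W $$ (i, j) \<ge> 0" if "i < n" "j < n" for i j using Wij[OF that] Gge[OF that] by simp
  have Wsym: "W $$ (i, j) = W $$ (j, i)" if "i < n" "j < n" for i j
    using Wij[OF that] Wij[OF that(2,1)] unfolding G_def by (simp add: mult.commute)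
  have Wrow: "(\<Sum>j=0..<n. W $$ (i, j)) = b * real n" if "i < n" for i
    using G0[OF that] Wij[OF that] by (simp add: sum.distrib)
  have Fdim: "dim_row F = K" "dim_col F = n" using F_dim by auto
  have Fswap: "W $$ (i, j) * F $$ (k, j) = W $$ (i, j) * F $$ (k, i)" if "i < n" "j < n" "k < K" for i j k
  proof (cases "col F i = col F j")
    case True
    then have "col F i $ k = col F j $ k" by simp
    then show ?thesis using that Fdim by simp
  next
    case False
    then have "W $$ (i, j) = 0" using ideal that unfolding W_def T_def by auto
    then show ?thesis by simp
  qed
  have eig: "W *\<^sub>v row F k = (b * real n) \<cdot>\<^sub>v row F k" if k: "k < K" for k
  proof (rule eq_vecI)
    fix i assume i: "i < dim_vec ((b * real n) \<cdot>\<^sub>v row F k)"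
    then have i': "i < n" using Fdim by simp
    have "(W *\<^sub>v row F k) $ i = (\<Sum>j=0..<n. W $$ (i, j) * F $$ (k, j))"
      using W i' k Fdim by (simp add: scalar_prod_def row_def)
    also have "\<dots> = (\<Sum>j=0..<n. W $$ (i, j) * F $$ (k, i))"
      using Fswap i' k by (intro sum.cong) auto
    also have "\<dots> = F $$ (k, i) * (b * real n)"
      unfolding Wrow[OF i', symmetric] sum_distrib_left by (simp add: ac_simps)
    finally show "(W *\<^sub>v row F k) $ i = ((b * real n) \<cdot>\<^sub>v row F k) $ i"
      using i' k Fdim by (simp add: mult.commute)
  qed (use W Fdim in simp)
  have FW: "F * W = (b * real n) \<cdot>\<^sub>m F"
  proof (rule eq_matI)
    fix k j assume kj: "k < dim_row ((b * real n) \<cdot>\<^sub>m F)" "j < dim_col ((b * real n) \<cdot>\<^sub>m F)"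
    then have k: "k < K" and j: "j < n" using Fdim by auto
    have "(F * W) $$ (k, j) = (\<Sum>i=0..<n. F $$ (k, i) * W $$ (i, j))"
      using W k j Fdim by (simp add: scalar_prod_def)
    also have "\<dots> = (\<Sum>i=0..<n. W $$ (j, i) * F $$ (k, i))"
      using Wsym j by (intro sum.cong) (auto simp: mult.commute)
    also have "\<dots> = (\<Sum>i=0..<n. W $$ (j, i) * F $$ (k, j))"
      using Fswap j k by (intro sum.cong) auto
    also have "\<dots> = F $$ (k, j) * (b * real n)"
      unfolding Wrow[OF j, symmetric] sum_distrib_left by (simp add: ac_simps)
    finally show "(F * W) $$ (k, j) = ((b * real n) \<cdot>\<^sub>m F) $$ (k, j)"
      using k j Fdim by (simp add: mult.commute)
  qed (use W Fdim in auto)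
  have bn: "b * real n > 0" using bpos npos by simp
  have sq: "sqrt (b * real n) ^ 2 = b * real n" using bn by simp
  have part1: "largest_singular_value T (sqrt (b * real n))"
    unfolding largest_singular_value_def singular_value_def
  proof (intro conjI allI impI)
    show "0 \<le> sqrt (b * real n)" using bn by simp
    have "eigenvector W (vec n (\<lambda>_. 1::real)) (b * real n)"
      unfolding eigenvector_def
    proof (intro conjI)
      show "vec n (\<lambda>_. 1::real) \<in> carrier_vec (dim_row W)" using W by simp
      show "vec n (\<lambda>_. 1::real) \<noteq> 0\<^sub>v (dim_row W)"
      proof
        assume "vec n (\<lambda>_. 1::real) = 0\<^sub>v (dim_row W)"
        then have "vec n (\<lambda>_. 1::real) $ 0 = 0\<^sub>v (dim_row W) $ 0" by simp
        then show False using npos W by simp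
      qed
      show "W *\<^sub>v vec n (\<lambda>_. 1::real) = (b * real n) \<cdot>\<^sub>v vec n (\<lambda>_. 1::real)"
      proof (rule eq_vecI)
        fix i assume "i < dim_vec ((b * real n) \<cdot>\<^sub>v vec n (\<lambda>_. 1::real))"
        then have i: "i < n" by simp
        have "(W *\<^sub>v vec n (\<lambda>_. 1::real)) $ i = (\<Sum>j=0..<n. W $$ (i, j))"
          using W i by (simp add: scalar_prod_def row_def)
        then show "(W *\<^sub>v vec n (\<lambda>_. 1)) $ i = ((b * real n) \<cdot>\<^sub>v vec n (\<lambda>_. 1)) $ i"
          using Wrow[OF i] i by simp
      qed (use W in simp)
    qed
    then show "eigenvalue (transpose_mat T * T) (sqrt (b * real n) ^ 2)"
      unfolding eigenvalue_def sq W_def by blast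
    fix t assume t: "0 \<le> t \<and> eigenvalue (transpose_mat T * T) (t ^ 2)"
    have "t ^ 2 \<le> b * real n"
      using eig_bound[OF W Wnn Wrow] t unfolding W_def by blast
    then show "t \<le> sqrt (b * real n)" using t by (simp add: real_le_rsqrt)
  qed
  have part2: "row F k \<in> right_singular_space T (sqrt (b * real n)) \<and> row F k \<in> row_space T"
    if k: "k < K" for k
  proof
    have rF: "row F k \<in> carrier_vec n" using row_carrier[of F k] Fdim(2) by simp
    have dT: "dim_col T = n" using T by simp
    show "row F k \<in> right_singular_space T (sqrt (b * real n))"
      unfolding right_singular_space_def mem_Collect_eq dT sq W_def[symmetric]
      using eig[OF k] rF by blast
    define c where "c = (1 / (b * real n)) \<cdot>\<^sub>v (T *\<^sub>v row F k)"
    have Tv: "T *\<^sub>v row F k \<in> carrier_vec (p+1)" using mult_mat_vec_carrier[OF T rF] .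
    have TT: "transpose_mat T \<in> carrier_mat n (p+1)" using T by simp
    have c: "c \<in> carrier_vec (dim_row T)" unfolding c_def using Tv T by simp
    have "transpose_mat T *\<^sub>v c = (1 / (b * real n)) \<cdot>\<^sub>v (transpose_mat T *\<^sub>v (T *\<^sub>v row F k))"
      unfolding c_def by (rule mult_mat_vec[OF TT Tv])
    also have "transpose_mat T *\<^sub>v (T *\<^sub>v row F k) = W *\<^sub>v row F k"
      unfolding W_def by (rule assoc_mult_mat_vec[OF TT T rF, symmetric])
    also have "(1 / (b * real n)) \<cdot>\<^sub>v (W *\<^sub>v row F k) = row F k"
    proof -
      have "1 / (b * real n) * (b * real n) = 1" using bpos npos by simp
      then show ?thesis unfolding eig[OF k] smult_smult_assoc by simp
    qed
    finally have rc: "row F k = transpose_mat T *\<^sub>v c" by simp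
    show "row F k \<in> row_space T" unfolding row_space_def using c rc by blast
  qed
  define D0 where "D0 = (1 / (b * real n)) \<cdot>\<^sub>m (F * transpose_mat T)"
  have TT: "transpose_mat T \<in> carrier_mat n (p+1)" using T by simp
  have FT: "F * transpose_mat T \<in> carrier_mat K (p+1)" using mult_carrier_mat[OF F_dim TT] .
  have D0: "D0 \<in> carrier_mat K (p + 1)" unfolding D0_def using FT by simp
  have "D0 * T = (1 / (b * real n)) \<cdot>\<^sub>m (F * transpose_mat T * T)"
    unfolding D0_def by (rule mult_smult_assoc_mat[OF FT T])
  also have "F * transpose_mat T * T = F * W"
    unfolding W_def by (rule assoc_mult_mat[OF F_dim TT T])
  also have "(1 / (b * real n)) \<cdot>\<^sub>m (F * W) = F"
  proof (rule eq_matI)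
    fix i j assume ij: "i < dim_row F" "j < dim_col F"
    have "1 / (b * real n) * (b * real n) = 1" using bpos npos by simp
    then have "1 / (b * real n) * (b * real n * F $$ (i, j)) = F $$ (i, j)"
      by (metis mult.assoc mult_1)
    then show "((1 / (b * real n)) \<cdot>\<^sub>m (F * W)) $$ (i, j) = F $$ (i, j)"
      unfolding FW using ij by simp
  qed (simp_all add: FW)
  finally have D0T: "D0 * T = F" .
  have frob_nn: "frob_sq M \<ge> 0" for M unfolding frob_sq_def by (intro sum_nonneg) auto
  have part3: "F = Ds * T" if Ds: "Ds \<in> carrier_mat K (p + 1)"
    and opt: "\<forall>D \<in> carrier_mat K (p + 1). frob_sq (F - Ds * T) \<le> frob_sq (F - D * T)" for Ds
  proof -
    have DsT: "Ds * T \<in> carrier_mat K n" using mult_carrier_mat[OF Ds T] .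
    have zF: "\<forall>i\<in>{..<dim_row (F - F)}. (\<Sum>j<dim_col (F - F). ((F - F) $$ (i, j))^2) = 0"
      by simp
    have "frob_sq (F - D0 * T) = 0" unfolding D0T frob_sq_def using zF by (rule sum.neutral)
    moreover have "frob_sq (F - Ds * T) \<le> frob_sq (F - D0 * T)" using opt D0 by blast
    ultimately have z: "frob_sq (F - Ds * T) = 0" using frob_nn[of "F - Ds * T"] by linarith
    have dims: "dim_row (F - Ds * T) = K" "dim_col (F - Ds * T) = n" using DsT by auto
    have ent: "(F - Ds * T) $$ (i, j) = 0" if ij: "i < K" "j < n" for i j
    proof -
      define g where "g i = (\<Sum>j<n. ((F - Ds * T) $$ (i, j))^2)" for i
      have nn: "\<And>i. 0 \<le> g i" unfolding g_def by (intro sum_nonneg) simp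
      have g0: "(\<Sum>i<K. g i) = 0"
        using z unfolding frob_sq_def dims g_def .
      have "g i = 0"
      proof (rule ccontr)
        assume "g i \<noteq> 0"
        then have "g i > 0" using nn[of i] by linarith
        moreover have "g i \<le> (\<Sum>i<K. g i)"
          by (rule member_le_sum) (use ij nn in auto)
        ultimately show False using g0 by linarith
      qed
      have h: "((F - Ds * T) $$ (i, j))^2 = 0"
      proof (rule ccontr)
        assume "((F - Ds * T) $$ (i, j))^2 \<noteq> 0"
        then have "((F - Ds * T) $$ (i, j))^2 > 0" by simp
        moreover have "((F - Ds * T) $$ (i, j))^2 \<le> g i"
          unfolding g_def by (rule member_le_sum) (use ij in auto)
        ultimately show False using \<open>g i = 0\<close> by linarith
      qed
      then show ?thesis by simp
    qed
    show "F = Ds * T"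
    proof (rule eq_matI)
      fix i j assume ij: "i < dim_row (Ds * T)" "j < dim_col (Ds * T)"
      then have i: "i < K" and j: "j < n" using DsT by auto
      have "(F - Ds * T) $$ (i, j) = F $$ (i, j) - (Ds * T) $$ (i, j)"
        using ij by (rule index_minus_mat(1))
      then show "F $$ (i, j) = (Ds * T) $$ (i, j)" using ent[OF i j] by simp
    next
      show "dim_row F = dim_row (Ds * T)" using F_dim Ds T by simp
    next
      show "dim_col F = dim_col (Ds * T)" using F_dim Ds T by simp
    qed
  qed
  show ?thesis using part1 part2 part3 unfolding b_def T_def by blast
qed

end
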